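(* Let $\mathbf{k}_1,\dots,\mathbf{k}_N \in \mathbb{R}^d$ (anchor keys), let $\delta:\mathbb{R}^d\to\mathbb{R}^d$ (the drift function), let $\mathbf{z}\in\mathbb{R}^d$ (a query), and let $\tau>0$, $\beta = 1/\tau$. Define the attention weights $p_i = \exp(\beta\mathbf{k}_i^\top\mathbf{z})/\sum_{j=1}^N\exp(\beta\mathbf{k}_j^\top\mathbf{z})$ and the estimate $\hat{\boldsymbol{\delta}}(\mathbf{z}) = \sum_{i=1}^N p_i\,\delta(\mathbf{k}_i)$. Assume there is a constant $L\ge 0$ such that $\|\delta(\mathbf{k}_i)-\delta(\mathbf{z})\| \le L\|\mathbf{k}_i-\mathbf{z}\|$ for all $i=1,\dots,N$. Then $$\|\hat{\boldsymbol{\delta}}(\mathbf{z}) - \delta(\mathbf{z})\| \le L\sum_{i=1}^N p_i\|\mathbf{k}_i-\mathbf{z}\|.$$ Furthermore, if $\|\mathbf{k}_i\| = \|\mathbf{z}\| = 1$ for all $i$, then $$\|\hat{\boldsymbol{\delta}}(\mathbf{z}) - \delta(\mathbf{z})\| \le L\Big(\min_i\|\mathbf{k}_i-\mathbf{z}\| + \sqrt{2\tau\log N}\Big).$$ Moreover, if the attention is restricted to the set $S$ of the $k$ anchors with the largest scores $\mathbf{k}_i^\top\mathbf{z}$ (with the softmax weights renormalized over $S$ and $\hat{\boldsymbol{\delta}}(\mathbf{z}) = \sum_{i\in S}p_i\delta(\mathbf{k}_i)$), then under the same normalization the last bound holds with $N$ replaced by $k$.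
   Context: Norms are Euclidean ($\ell_2$). The quantity $\hat{\boldsymbol{\delta}}(\mathbf{z})$ is the drift estimate of a softmax (dot-product) attention retrieval over anchor keys $\mathbf{k}_i$ whose associated values are the drifts $\delta(\mathbf{k}_i)$; $\tau$ is the softmax temperature. *)

theory Defs
  imports "HOL-Analysis.Analysis"
begin

definition attn_weight :: "real \<Rightarrow> (nat \<Rightarrow> real^'d) \<Rightarrow> nat set \<Rightarrow> real^'d \<Rightarrow> nat \<Rightarrow> real" where
  "attn_weight \<beta> K I z i = exp (\<beta> * (K i \<bullet> z)) / (\<Sum>j\<in>I. exp (\<beta> * (K j \<bullet> z)))"

definition drift_est :: "real \<Rightarrow> (nat \<Rightarrow> real^'d) \<Rightarrow> nat set \<Rightarrow> (real^'d \<Rightarrow> real^'d) \<Rightarrow> real^'d \<Rightarrow> real^'d" where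
  "drift_est \<beta> K I \<delta> z = (\<Sum>i\<in>I. attn_weight \<beta> K I z i *\<^sub>R \<delta> (K i))"

end

theory Submission
  imports Defs
begin

lemma aw_pos:
  assumes "finite I" "I \<noteq> {}" "i \<in> I"
  shows "attn_weight \<beta> K I z i > 0"
proof -
  have "(\<Sum>j\<in>I. exp (\<beta> * (K j \<bullet> z))) > 0"
    using assms by (intro sum_pos) auto
  then show ?thesis unfolding attn_weight_def by simp
qed

lemma aw_sum:
  assumes "finite I" "I \<noteq> {}"
  shows "(\<Sum>i\<in>I. attn_weight \<beta> K I z i) = 1"
proof -
  have "(\<Sum>j\<in>I. exp (\<beta> * (K j \<bullet> z))) > 0"
    using assms by (intro sum_pos) auto
  then show ?thesis unfolding attn_weight_def by (simp add: sum_divide_distrib[symmetric])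
qed

lemma part1:
  assumes "finite I" "I \<noteq> {}"
    and lip: "\<And>i. i \<in> I \<Longrightarrow> norm (\<delta> (K i) - \<delta> z) \<le> L * norm (K i - z)"
  shows "norm (drift_est \<beta> K I \<delta> z - \<delta> z) \<le> L * (\<Sum>i\<in>I. attn_weight \<beta> K I z i * norm (K i - z))"
proof -
  let ?p = "attn_weight \<beta> K I z"
  have "drift_est \<beta> K I \<delta> z - \<delta> z = (\<Sum>i\<in>I. ?p i *\<^sub>R \<delta> (K i)) - (\<Sum>i\<in>I. ?p i) *\<^sub>R \<delta> z"
    unfolding drift_est_def using aw_sum[OF assms(1,2), of \<beta> K z] by simp
  also have "\<dots> = (\<Sum>i\<in>I. ?p i *\<^sub>R (\<delta> (K i) - \<delta> z))"
    by (simp add: scaleR_sum_left sum_subtractf scaleR_diff_right)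
  finally have e: "drift_est \<beta> K I \<delta> z - \<delta> z = (\<Sum>i\<in>I. ?p i *\<^sub>R (\<delta> (K i) - \<delta> z))" .
  have "norm (\<Sum>i\<in>I. ?p i *\<^sub>R (\<delta> (K i) - \<delta> z)) \<le> (\<Sum>i\<in>I. norm (?p i *\<^sub>R (\<delta> (K i) - \<delta> z)))"
    by (rule norm_sum)
  also have "\<dots> \<le> (\<Sum>i\<in>I. ?p i * (L * norm (K i - z)))"
  proof (rule sum_mono)
    fix i assume i: "i \<in> I"
    have "?p i > 0" using aw_pos[OF assms(1,2) i] .
    then show "norm (?p i *\<^sub>R (\<delta> (K i) - \<delta> z)) \<le> ?p i * (L * norm (K i - z))"
      using lip[OF i] by (simp add: mult_left_mono)
  qed
  also have "\<dots> = L * (\<Sum>i\<in>I. ?p i * norm (K i - z))"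
    by (simp add: sum_distrib_left algebra_simps)
  finally show ?thesis using e by simp
qed

lemma entropy_bound:
  assumes "finite I" "I \<noteq> {}" "m \<in> I" and tau: "\<tau> > 0" and beta: "\<beta> = 1 / \<tau>"
  shows "(\<Sum>i\<in>I. attn_weight \<beta> K I z i * (K m \<bullet> z - K i \<bullet> z)) \<le> \<tau> * ln (real (card I))"
proof -
  let ?p = "attn_weight \<beta> K I z"
  let ?a = "\<lambda>i. \<beta> * (K i \<bullet> z)"
  define Z where "Z = (\<Sum>j\<in>I. exp (?a j))"
  define n where "n = real (card I)"
  have n: "n > 0" using assms unfolding n_def by (simp add: card_gt_0_iff)
  have Z: "Z > 0" unfolding Z_def using assms by (intro sum_pos) auto
  have Zm: "exp (?a m) \<le> Z" unfolding Z_def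
    using assms by (intro member_le_sum) auto
  have lnZ: "?a m \<le> ln Z" using Zm Z by (metis ln_exp ln_le_cancel_iff exp_gt_zero)
  have pdef: "?p i = exp (?a i) / Z" for i unfolding attn_weight_def Z_def by simp
  have sum1: "(\<Sum>i\<in>I. ?p i) = 1" by (rule aw_sum[OF assms(1,2)])
  have step: "?p i * (?a m - ?a i) \<le> ?p i * ln n + (1 / n - ?p i)" if i: "i \<in> I" for i
  proof -
    have pp: "?p i > 0" using aw_pos[OF assms(1,2) i] .
    have lnp: "ln (?p i) = ?a i - ln Z" using Z by (simp add: pdef ln_div)
    have "ln (1 / (n * ?p i)) \<le> 1 / (n * ?p i) - 1"
      using pp n by (intro ln_le_minus_one) simp
    moreover have "ln (1 / (n * ?p i)) = - ln n - ln (?p i)"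
      using pp n by (simp add: ln_div ln_mult)
    ultimately have "- ln n - ln (?p i) \<le> 1 / (n * ?p i) - 1" by simp
    hence "?p i * (- ln n - ln (?p i)) \<le> ?p i * (1 / (n * ?p i) - 1)"
      using pp by (intro mult_left_mono) auto
    also have "\<dots> = 1 / n - ?p i" using pp n by (simp add: field_simps)
    finally have A: "?p i * (- ln n - ln (?p i)) \<le> 1 / n - ?p i" .
    have "?a m - ?a i \<le> - ln (?p i)" using lnp lnZ by simp
    hence "?p i * (?a m - ?a i) \<le> ?p i * (- ln (?p i))" using pp by (intro mult_left_mono) auto
    then show ?thesis using A by (simp add: algebra_simps)
  qed
  have "(\<Sum>i\<in>I. ?p i * (?a m - ?a i)) \<le> (\<Sum>i\<in>I. ?p i * ln n + (1 / n - ?p i))"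
    by (rule sum_mono) (use step in auto)
  also have "\<dots> = ln n"
    using sum1 n by (simp add: sum.distrib sum_subtractf sum_distrib_right[symmetric] n_def)
  finally have B: "(\<Sum>i\<in>I. ?p i * (?a m - ?a i)) \<le> ln n" .
  have "(\<Sum>i\<in>I. ?p i * (?a m - ?a i)) = \<beta> * (\<Sum>i\<in>I. ?p i * (K m \<bullet> z - K i \<bullet> z))"
    by (simp add: sum_distrib_left algebra_simps)
  with B have "\<beta> * (\<Sum>i\<in>I. ?p i * (K m \<bullet> z - K i \<bullet> z)) \<le> ln n" by simp
  hence "\<tau> * (\<beta> * (\<Sum>i\<in>I. ?p i * (K m \<bullet> z - K i \<bullet> z))) \<le> \<tau> * ln n"
    using tau by (intro mult_left_mono) auto
  then show ?thesis using tau beta by (simp add: n_def)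
qed

lemma part2:
  assumes "finite I" "I \<noteq> {}" "m \<in> I" and tau: "\<tau> > 0" and beta: "\<beta> = 1 / \<tau>"
    and unit: "\<forall>i\<in>I. norm (K i) = 1" and z: "norm z = 1"
  shows "(\<Sum>i\<in>I. attn_weight \<beta> K I z i * norm (K i - z)) \<le> norm (K m - z) + sqrt (2 * \<tau> * ln (real (card I)))"
proof -
  let ?p = "attn_weight \<beta> K I z"
  let ?d = "\<lambda>i. norm (K i - z)"
  have pp: "?p i \<ge> 0" if "i \<in> I" for i using aw_pos[OF assms(1,2) that, of \<beta> K z] by simp
  have sum1: "(\<Sum>i\<in>I. ?p i) = 1" by (rule aw_sum[OF assms(1,2)])
  have dsq: "(?d i)^2 = 2 - 2 * (K i \<bullet> z)" if "i \<in> I" for i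
    using dot_norm_neg[of "K i" z] unit that z by simp
  have n1: "real (card I) \<ge> 1" using assms by (metis card_0_eq less_one not_le of_nat_1 of_nat_le_iff)
  have lnn: "ln (real (card I)) \<ge> 0" using n1 by simp
  have CS: "(\<Sum>i\<in>I. ?p i * ?d i)^2 \<le> (\<Sum>i\<in>I. ?p i * (?d i)^2)"
  proof -
    have "(\<Sum>i\<in>I. ?p i * ?d i) = (\<Sum>i\<in>I. sqrt (?p i) * (sqrt (?p i) * ?d i))"
      by (rule sum.cong) (use pp in \<open>auto simp: mult.assoc[symmetric]\<close>)
    also have "(\<dots>)^2 \<le> (\<Sum>i\<in>I. (sqrt (?p i))^2) * (\<Sum>i\<in>I. (sqrt (?p i) * ?d i)^2)"
      by (rule Cauchy_Schwarz_ineq_sum)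
    also have "\<dots> = (\<Sum>i\<in>I. ?p i * (?d i)^2)"
      using sum1 pp by (simp add: power_mult_distrib)
    finally show ?thesis .
  qed
  have "(\<Sum>i\<in>I. ?p i * (?d i)^2) = (\<Sum>i\<in>I. ?p i * ((?d m)^2 + 2 * (K m \<bullet> z - K i \<bullet> z)))"
    by (rule sum.cong) (use dsq assms(3) in auto)
  also have "\<dots> = (\<Sum>i\<in>I. (?d m)^2 * ?p i + 2 * (?p i * (K m \<bullet> z - K i \<bullet> z)))"
    by (rule sum.cong) (auto simp: algebra_simps)
  also have "\<dots> = (?d m)^2 * (\<Sum>i\<in>I. ?p i) + 2 * (\<Sum>i\<in>I. ?p i * (K m \<bullet> z - K i \<bullet> z))"
    by (simp add: sum.distrib sum_distrib_left)
  also have "\<dots> \<le> (?d m)^2 + 2 * (\<tau> * ln (real (card I)))"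
    using entropy_bound[OF assms(1-5), of K z] sum1 by simp
  finally have V: "(\<Sum>i\<in>I. ?p i * (?d i)^2) \<le> (?d m)^2 + 2 * \<tau> * ln (real (card I))" by simp
  have "(\<Sum>i\<in>I. ?p i * ?d i) \<le> sqrt ((\<Sum>i\<in>I. ?p i * ?d i)^2)" by simp
  also have "\<dots> \<le> sqrt ((?d m)^2 + 2 * \<tau> * ln (real (card I)))"
    using CS V by (intro real_sqrt_le_mono) linarith
  also have "\<dots> \<le> sqrt ((?d m)^2) + sqrt (2 * \<tau> * ln (real (card I)))"
    using tau lnn by (intro sqrt_add_le_add_sqrt) auto
  also have "\<dots> = ?d m + sqrt (2 * \<tau> * ln (real (card I)))" by simp
  finally show ?thesis .
qed

theorem proposition3p6:
  fixes K :: "nat \<Rightarrow> real^'d" and \<delta> :: "real^'d \<Rightarrow> real^'d" and z :: "real^'d"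
    and N :: nat and \<tau> \<beta> L :: real
  assumes N: "N \<ge> 1"
    and tau: "\<tau> > 0" and beta: "\<beta> = 1 / \<tau>"
    and L: "L \<ge> 0"
    and lip: "\<And>i. i \<in> {1..N} \<Longrightarrow> norm (\<delta> (K i) - \<delta> z) \<le> L * norm (K i - z)"
  shows "norm (drift_est \<beta> K {1..N} \<delta> z - \<delta> z)
           \<le> L * (\<Sum>i\<in>{1..N}. attn_weight \<beta> K {1..N} z i * norm (K i - z))
    \<and> ((\<forall>i\<in>{1..N}. norm (K i) = 1) \<and> norm z = 1 \<longrightarrow>
           norm (drift_est \<beta> K {1..N} \<delta> z - \<delta> z)
             \<le> L * (Min ((\<lambda>i. norm (K i - z)) ` {1..N}) + sqrt (2 * \<tau> * ln (real N))))
    \<and> (\<forall>S k. S \<subseteq> {1..N} \<and> card S = k \<and> k \<ge> 1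
              \<and> (\<forall>i\<in>S. \<forall>j\<in>{1..N} - S. K j \<bullet> z \<le> K i \<bullet> z)
              \<and> (\<forall>i\<in>{1..N}. norm (K i) = 1) \<and> norm z = 1 \<longrightarrow>
           norm (drift_est \<beta> K S \<delta> z - \<delta> z)
             \<le> L * (Min ((\<lambda>i. norm (K i - z)) ` {1..N}) + sqrt (2 * \<tau> * ln (real k))))"
proof -
  have fin: "finite {1..N}" and ne: "{1..N} \<noteq> {}" using N by auto
  have P1: "norm (drift_est \<beta> K {1..N} \<delta> z - \<delta> z)
           \<le> L * (\<Sum>i\<in>{1..N}. attn_weight \<beta> K {1..N} z i * norm (K i - z))"
    by (rule part1[OF fin ne lip])
  obtain j where j: "j \<in> {1..N}" and jmin: "Min ((\<lambda>i. norm (K i - z)) ` {1..N}) = norm (K j - z)"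
    using fin ne by (metis (no_types, lifting) Min_in finite_imageI image_iff image_is_empty)
  have P2: "norm (drift_est \<beta> K {1..N} \<delta> z - \<delta> z)
             \<le> L * (Min ((\<lambda>i. norm (K i - z)) ` {1..N}) + sqrt (2 * \<tau> * ln (real N)))"
    if u: "(\<forall>i\<in>{1..N}. norm (K i) = 1)" "norm z = 1"
  proof -
    have "(\<Sum>i\<in>{1..N}. attn_weight \<beta> K {1..N} z i * norm (K i - z))
        \<le> norm (K j - z) + sqrt (2 * \<tau> * ln (real (card {1..N})))"
      by (rule part2[OF fin ne j tau beta u])
    then show ?thesis using P1 L jmin
      by (smt (verit, best) card_atLeastAtMost diff_Suc_1 mult_left_mono)
  qed
  have P3: "norm (drift_est \<beta> K S \<delta> z - \<delta> z)
             \<le> L * (Min ((\<lambda>i. norm (K i - z)) ` {1..N}) + sqrt (2 * \<tau> * ln (real k)))"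
    if S: "S \<subseteq> {1..N}" "card S = k" "k \<ge> 1"
      "\<forall>i\<in>S. \<forall>j\<in>{1..N} - S. K j \<bullet> z \<le> K i \<bullet> z"
      "\<forall>i\<in>{1..N}. norm (K i) = 1" "norm z = 1" for S k
  proof -
    have finS: "finite S" using S(1) fin finite_subset by blast
    have neS: "S \<noteq> {}" using S(2,3) by auto
    obtain m where m: "m \<in> S" and mj: "K j \<bullet> z \<le> K m \<bullet> z"
    proof (cases "j \<in> S")
      case True then show ?thesis using that by blast
    next
      case False
      from neS obtain m where "m \<in> S" by blast
      then show ?thesis using that S(4) False j by blast
    qed
    have mN: "m \<in> {1..N}" using m S(1) by blast
    have dm: "norm (K m - z) \<le> norm (K j - z)"
    proof -
      have "(norm (K m - z))^2 \<le> (norm (K j - z))^2"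
      proof -
        have "2 * (K m \<bullet> z) = 2 - (norm (K m - z))^2"
          using dot_norm_neg[of "K m" z] S(5,6) mN by simp
        moreover have "2 * (K j \<bullet> z) = 2 - (norm (K j - z))^2"
          using dot_norm_neg[of "K j" z] S(5,6) j by simp
        ultimately show ?thesis using mj by linarith
      qed
      then show ?thesis by (rule power2_le_imp_le) simp
    qed
    have uS: "\<forall>i\<in>S. norm (K i) = 1" using S(1,5) by blast
    have A: "norm (drift_est \<beta> K S \<delta> z - \<delta> z) \<le> L * (\<Sum>i\<in>S. attn_weight \<beta> K S z i * norm (K i - z))"
      by (rule part1[OF finS neS]) (use lip S(1) in blast)
    have B: "(\<Sum>i\<in>S. attn_weight \<beta> K S z i * norm (K i - z))
        \<le> norm (K m - z) + sqrt (2 * \<tau> * ln (real (card S)))"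
      by (rule part2[OF finS neS m tau beta uS S(6)])
    have "L * (\<Sum>i\<in>S. attn_weight \<beta> K S z i * norm (K i - z))
        \<le> L * (Min ((\<lambda>i. norm (K i - z)) ` {1..N}) + sqrt (2 * \<tau> * ln (real k)))"
      using B dm jmin S(2) L by (intro mult_left_mono) auto
    then show ?thesis using A by linarith
  qed
  show ?thesis using P1 P2 P3 by blast
qed

end
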